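(* Let $p$ be a prime greater than $3$. Then $$\sum_{k=0}^{[p/3]}\frac{(3k)!}{27^k\,k!^3}\equiv\Big(\frac p3\Big)\pmod p.$$
   Context: $[y]$ is the greatest integer not exceeding $y$; $\big(\frac p3\big)$ is the Legendre symbol. *)

theory Defs
  imports "HOL-Number_Theory.Number_Theory"
begin

text \<open>Congruence of rationals modulo an integer m: r - s, written in lowest terms a/b,
  has denominator b coprime to m and numerator a divisible by m
  (i.e. r - s lies in m times the localisation of Z away from m).\<close>
definition rat_cong :: "rat \<Rightarrow> rat \<Rightarrow> int \<Rightarrow> bool" where
  "rat_cong r s m = (case quotient_of (r - s) of (a, b) \<Rightarrow> coprime b m \<and> m dvd a)"

end

theory Submission
  imports Defs
begin
definition good :: "int \<Rightarrow> rat \<Rightarrow> bool" where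
  "good m x = (\<exists>a b. b \<noteq> 0 \<and> coprime b m \<and> x = of_int (m*a) / of_int b)"

lemma good_rc: assumes "good m (r - s)" shows "rat_cong r s m"
proof -
  obtain a b where ab: "b \<noteq> 0" "coprime b m" "r - s = of_int (m*a) / of_int b"
    using assms unfolding good_def by blast
  obtain c d where q: "quotient_of (r - s) = (c, d)" by (cases "quotient_of (r - s)")
  have d0: "d > 0" using quotient_of_denom_pos[OF q] .
  have cd: "coprime c d" using quotient_of_coprime[OF q] .
  have "r - s = of_int c / of_int d" using quotient_of_div[OF q] .
  with ab have "(of_int c / of_int d :: rat) = of_int (m*a) / of_int b" by simp
  hence "(of_int c * of_int b :: rat) = of_int (m*a) * of_int d"
    using d0 ab(1) by (simp add: frac_eq_eq)
  hence e: "c*b = m*a*d" by (metis of_int_eq_iff of_int_mult)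
  have "d dvd c*b" using e by simp
  hence "d dvd b" using cd by (metis coprime_commute coprime_dvd_mult_right_iff)
  hence cdm: "coprime d m" using coprime_divisors[OF _ dvd_refl ab(2)] by blast
  have "m dvd c*b" using e by simp
  hence "m dvd c" using ab(2) by (metis coprime_commute coprime_dvd_mult_left_iff)
  thus ?thesis using cdm q unfolding rat_cong_def by simp
qed
lemma good_add: assumes "good m x" "good m y" shows "good m (x + y)"
proof -
  obtain a b where ab: "b \<noteq> 0" "coprime b m" "x = of_int (m*a) / of_int b"
    using assms(1) unfolding good_def by blast
  obtain c d where cd: "d \<noteq> 0" "coprime d m" "y = of_int (m*c) / of_int d"
    using assms(2) unfolding good_def by blast
  have "x + y = of_int (m*(a*d + c*b)) / of_int (b*d)"
    using ab cd by (simp add: field_simps)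
  moreover have "b*d \<noteq> 0" "coprime (b*d) m" using ab cd by auto
  ultimately show ?thesis unfolding good_def by blast
qed

lemma good_0: "good m 0"
  unfolding good_def by (rule exI[of _ 0], rule exI[of _ 1]) simp

lemma good_sum: "(\<And>k. k \<in> A \<Longrightarrow> good m (f k)) \<Longrightarrow> good m (\<Sum>k\<in>A. f k)"
proof (induction A rule: infinite_finite_induct)
  case (infinite A) then show ?case by (simp add: good_0)
next
  case empty then show ?case by (simp add: good_0)
next
  case (insert x F) then show ?case by (simp add: good_add)
qed


lemma vand: "(\<Sum>k=0..n. (of_nat (m choose k)::rat) * (b gchoose (n - k))) = (of_nat m + b) gchoose n"
proof (induction m arbitrary: n)
  case 0
  have "(\<Sum>k=0..n. (of_nat (0 choose k)::rat) * (b gchoose (n - k))) = (\<Sum>k=0..n. if k = 0 then b gchoose n else 0)"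
    by (rule sum.cong) auto
  also have "\<dots> = b gchoose n" by simp
  finally show ?case by simp
next
  case (Suc m)
  show ?case
  proof (cases n)
    case 0 then show ?thesis by simp
  next
    case (Suc n')
    let ?g = "\<lambda>j. b gchoose j"
    have A: "(\<Sum>k=0..Suc n'. (of_nat (Suc m choose k)::rat) * ?g (Suc n' - k))
        = ?g (Suc n') + (\<Sum>k=0..n'. of_nat (Suc m choose Suc k) * ?g (n' - k))"
      by (subst sum.atLeast0_atMost_Suc_shift) simp
    have B: "(\<Sum>k=0..Suc n'. (of_nat (m choose k)::rat) * ?g (Suc n' - k))
        = ?g (Suc n') + (\<Sum>k=0..n'. of_nat (m choose Suc k) * ?g (n' - k))"
      by (subst sum.atLeast0_atMost_Suc_shift) simp
    have C: "(\<Sum>k=0..n'. (of_nat (Suc m choose Suc k)::rat) * ?g (n' - k))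
        = (\<Sum>k=0..n'. of_nat (m choose k) * ?g (n' - k)) + (\<Sum>k=0..n'. of_nat (m choose Suc k) * ?g (n' - k))"
      by (simp add: sum.distrib[symmetric] algebra_simps)
    have "(\<Sum>k=0..Suc n'. (of_nat (Suc m choose k)::rat) * ?g (Suc n' - k))
       = ((of_nat m + b) gchoose n') + ((of_nat m + b) gchoose (Suc n'))"
      using A B C Suc.IH[of n'] Suc.IH[of "Suc n'"] by simp
    also have "\<dots> = (of_nat m + b + 1) gchoose (Suc n')"
      by (simp add: gbinomial_Suc_Suc)
    finally show ?thesis using Suc by (simp add: algebra_simps)
  qed
qed

lemma sum_c: "(\<Sum>k=0..N. ((of_nat N::rat) gchoose k) * ((- of_nat N - 1) gchoose k)) = (-1) ^ N"
proof -
  have "(\<Sum>k=0..N. ((of_nat N::rat) gchoose k) * ((- of_nat N - 1) gchoose k))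
      = (\<Sum>k=0..N. (of_nat (N choose (N - k))::rat) * ((- of_nat N - 1) gchoose (N - (N - k))))"
    by (rule sum.cong) (auto simp: binomial_gbinomial[symmetric] binomial_symmetric[symmetric])
  also have "\<dots> = (\<Sum>k=0..N. (of_nat (N choose k)::rat) * ((- of_nat N - 1) gchoose (N - k)))"
    by (rule sum.reindex_bij_witness[of _ "\<lambda>k. N - k" "\<lambda>k. N - k"]) auto
  also have "\<dots> = (of_nat N + (- of_nat N - 1)) gchoose N" by (rule vand)
  also have "\<dots> = (-1) ^ N"
    by (simp add: gbinomial_pochhammer pochhammer_fact[symmetric])
  finally show ?thesis .
qed

lemma e_eq: "(of_int (\<Prod>i<k. (int N - int i) * (- int N - 1 - int i)) :: rat)
   = fact k * fact k * (((of_nat N::rat) gchoose k) * ((- of_nat N - 1) gchoose k))"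
proof -
  have "(of_int (\<Prod>i<k. (int N - int i) * (- int N - 1 - int i)) :: rat)
       = (\<Prod>i = 0..<k. (of_nat N::rat) - of_nat i) * (\<Prod>i = 0..<k. (- of_nat N - 1) - of_nat i)"
    by (simp add: prod.distrib atLeast0LessThan)
  also have "\<dots> = (fact k * ((of_nat N::rat) gchoose k)) * (fact k * ((- of_nat N - 1) gchoose k))"
    by (simp add: gbinomial_mult_fact)
  finally show ?thesis by (simp add: algebra_simps)
qed

lemma step_dvd:
  fixes P N k :: int
  assumes "P = 3*N + r" "r = 1 \<or> r = 2"
  shows "P dvd (3*k+1)*(3*k+2)*(3*k+3) - 27*(k+1)*((N - k)*(-N-1-k))"
proof -
  have "(3*k+1)*(3*k+2)*(3*k+3) - 27*(k+1)*((N - k)*(-N-1-k)) = P * (3*(k+1)*(3*N+3-r))"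
    using assms by (auto simp: algebra_simps)
  thus ?thesis by simp
qed


definition ee :: "nat \<Rightarrow> nat \<Rightarrow> int" where
  "ee N k = (\<Prod>i<k. (int N - int i) * (- int N - 1 - int i))"

lemma cong3:
  fixes P :: int
  assumes "P = 3*int N + r" "r = 1 \<or> r = 2"
  shows "[(fact (3*k)::int) = 27^k * fact k * ee N k] (mod P)"
proof (induction k)
  case 0 then show ?case by (simp add: ee_def)
next
  case (Suc k)
  have f: "(fact (3*Suc k)::int) = fact (3*k) * ((3*int k+1)*(3*int k+2)*(3*int k+3))"
  proof -
    have "3 * Suc k = Suc (Suc (Suc (3*k)))" by simp
    hence "(fact (3*Suc k)::int) = fact (Suc (Suc (Suc (3*k))))" by metis
    also have "\<dots> = fact (3*k) * ((3*int k+1)*(3*int k+2)*(3*int k+3))"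
      by (simp add: fact_Suc algebra_simps)
    finally show ?thesis .
  qed
  have g: "27^Suc k * fact (Suc k) * ee N (Suc k)
      = (27^k * fact k * ee N k) * (27*(int k+1)*((int N - int k)*(-int N-1-int k)))"
    by (simp add: ee_def fact_Suc algebra_simps)
  have d: "[(3*int k+1)*(3*int k+2)*(3*int k+3) = 27*(int k+1)*((int N - int k)*(-int N-1-int k))] (mod P)"
    using step_dvd[OF assms, of "int k"] by (simp add: cong_iff_dvd_diff)
  have "[fact (3*k) * ((3*int k+1)*(3*int k+2)*(3*int k+3))
        = (27^k * fact k * ee N k) * (27*(int k+1)*((int N - int k)*(-int N-1-int k)))] (mod P)"
    by (rule cong_mult[OF Suc.IH d])
  thus ?case unfolding f g .
qed

lemma legendre_val:
  fixes p :: nat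
  assumes "prime p" "p > 3"
  shows "Legendre (int p) 3 = (-1) ^ (p div 3)"
proof -
  have odd: "odd p" using prime_odd_nat[OF assms(1)] assms(2) by simp
  have n3: "\<not> 3 dvd p"
  proof
    assume "3 dvd p"
    have h: "1 < p \<and> (\<forall>m. m dvd p \<longrightarrow> m = 1 \<or> m = p)" by (rule prime_nat_iff[THEN iffD1, OF assms(1)])
    hence "(3::nat) = 1 \<or> 3 = p" using \<open>3 dvd p\<close> by blast
    thus False using assms(2) by simp
  qed
  have pm: "int p mod 3 = int (p mod 3)" by (simp add: of_nat_mod)
  have pe: "p = 3 * (p div 3) + p mod 3" by simp
  have "p mod 3 \<noteq> 0" using n3 by (simp add: dvd_eq_mod_eq_0)
  moreover have "p mod 3 < 3" by simp
  ultimately have "p mod 3 = 1 \<or> p mod 3 = 2" by linarith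
  thus ?thesis
  proof
    assume h: "p mod 3 = 1"
    have "odd (3 * (p div 3) + 1)" using odd pe h by simp
    hence e: "even (p div 3)" by simp
    have "\<not> [int p = 0] (mod 3)" using h pm by (simp add: cong_def)
    moreover have "QuadRes 3 (int p)" unfolding QuadRes_def
      by (rule exI[of _ 1]) (simp add: cong_def pm h)
    ultimately show ?thesis using e by (simp add: Legendre_def)
  next
    assume h: "p mod 3 = 2"
    have "odd (3 * (p div 3) + 2)" using odd pe h by simp
    hence e: "odd (p div 3)" by simp
    have "\<not> [int p = 0] (mod 3)" using h pm by (simp add: cong_def)
    moreover have "\<not> QuadRes 3 (int p)"
    proof
      assume "QuadRes 3 (int p)"
      then obtain y :: int where "[y^2 = int p] (mod 3)" unfolding QuadRes_def by blast
      hence 1: "(y^2) mod 3 = 2" using h pm by (simp add: cong_def)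
      have 2: "(y^2) mod 3 = ((y mod 3)^2) mod 3" by (simp add: power_mod)
      have "y mod 3 \<ge> 0" "y mod 3 < 3" by simp_all
      hence "y mod 3 = 0 \<or> y mod 3 = 1 \<or> y mod 3 = 2" by linarith
      thus False using 1 2 by auto
    qed
    ultimately show ?thesis using e by (simp add: Legendre_def)
  qed
qed

lemma coprime_bk:
  fixes p :: nat
  assumes "prime p" "p > 3" "k < p"
  shows "coprime (int (27 ^ k * fact k ^ 3)) (int p)"
proof -
  have n3: "\<not> p dvd 3" using assms(2) by (auto dest: dvd_imp_le)
  have c3: "coprime (3::nat) p" using prime_imp_coprime[OF assms(1) n3] by (simp add: coprime_commute)
  have nf: "\<not> p dvd fact k" using prime_dvd_fact_iff[OF assms(1)] assms(3) by simp
  have cf: "coprime (fact k) p" using prime_imp_coprime[OF assms(1) nf] by (simp add: coprime_commute)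
  have "(27::nat) ^ k = 3 ^ (3 * k)" by (simp add: power_mult)
  hence "coprime (27 ^ k * fact k ^ 3) p" using c3 cf by simp
  thus ?thesis by (simp only: coprime_int_iff)
qed

lemma p_mod3:
  fixes p :: nat
  assumes "prime p" "p > 3"
  shows "p mod 3 = 1 \<or> p mod 3 = 2"
proof -
  have n3: "\<not> 3 dvd p"
  proof
    assume "3 dvd p"
    have h: "1 < p \<and> (\<forall>m. m dvd p \<longrightarrow> m = 1 \<or> m = p)" by (rule prime_nat_iff[THEN iffD1, OF assms(1)])
    hence "(3::nat) = 1 \<or> 3 = p" using \<open>3 dvd p\<close> by blast
    thus False using assms(2) by simp
  qed
  have "p mod 3 \<noteq> 0" using n3 by (simp add: dvd_eq_mod_eq_0)
  moreover have "p mod 3 < 3" by simp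
  ultimately show ?thesis by linarith
qed

theorem corollary2p2:
  fixes p :: nat
  assumes "prime p" and "p > 3"
  shows "rat_cong
           (\<Sum>k = 0..p div 3. of_nat (fact (3 * k)) / (27 ^ k * (of_nat (fact k)) ^ 3))
           (of_int (Legendre (int p) 3)) (int p)"
proof -
  define N where "N = p div 3"
  have pe: "p = 3 * N + p mod 3" unfolding N_def by simp
  hence r: "int p = 3 * int N + int (p mod 3)" by (metis of_nat_add of_nat_mult of_nat_numeral)
  have r12: "int (p mod 3) = 1 \<or> int (p mod 3) = 2" using p_mod3[OF assms] by auto
  have Np: "N < p" unfolding N_def using assms(2) by simp
  define t where "t k = (of_nat (fact (3 * k)) / (27 ^ k * (of_nat (fact k)) ^ 3) :: rat)" for k
  define c where "c k = (of_int (ee N k) / (fact k * fact k) :: rat)" for k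
  have cG: "c k = ((of_nat N::rat) gchoose k) * ((- of_nat N - 1) gchoose k)" for k
    using e_eq[of N k] unfolding c_def ee_def by simp
  have sc: "(\<Sum>k=0..N. c k) = (-1)^N" using sum_c[of N] by (simp add: cG)
  have L: "(of_int (Legendre (int p) 3) :: rat) = (-1)^N"
    using legendre_val[OF assms] unfolding N_def by simp
  have diff: "(\<Sum>k = 0..N. t k) - (-1)^N = (\<Sum>k=0..N. t k - c k)"
    using sc by (simp add: sum_subtractf)
  have gk: "good (int p) (t k - c k)" if kN: "k \<in> {0..N}" for k
  proof -
    have "[(fact (3*k)::int) = 27^k * fact k * ee N k] (mod int p)"
      by (rule cong3[OF r r12])
    then obtain a where a: "(fact (3*k)::int) - 27^k * fact k * ee N k = int p * a"
      by (auto simp: cong_iff_dvd_diff elim!: dvdE)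
    have fk: "(fact k :: rat) \<noteq> 0" by simp
    have "t k - c k = (fact (3*k) - 27^k * fact k * of_int (ee N k)) / (27^k * fact k ^ 3)"
      unfolding t_def c_def using fk by (simp add: field_simps power3_eq_cube)
    also have "\<dots> = of_int ((fact (3*k)::int) - 27^k * fact k * ee N k) / of_int (int (27 ^ k * fact k ^ 3))"
      by simp
    also have "\<dots> = of_int (int p * a) / of_int (int (27 ^ k * fact k ^ 3))"
      using a by simp
    finally have eq: "t k - c k = of_int (int p * a) / of_int (int (27 ^ k * fact k ^ 3))" .
    have "k < p" using kN Np by simp
    hence "coprime (int (27 ^ k * fact k ^ 3)) (int p)" using coprime_bk[OF assms] by simp
    moreover have "int (27 ^ k * fact k ^ 3) \<noteq> 0" by simp
    ultimately show ?thesis unfolding good_def using eq by blast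
  qed
  have "good (int p) ((\<Sum>k = 0..N. t k) - (-1)^N)"
    unfolding diff by (rule good_sum) (rule gk)
  hence "rat_cong (\<Sum>k = 0..N. t k) ((-1)^N) (int p)" by (rule good_rc)
  thus ?thesis unfolding L t_def N_def .
qed
end
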